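(* Let $\Omega\subset\mathbb{R}^N$ be an open domain, let $g:\mathbb{R}^N\setminus\Omega\to\mathbb{R}$, and let $\mathcal{A}:\Omega\times\mathcal{X}\times\mathbb{R}\to\mathbb{R}$ satisfy assumptions (a), (b), (c) below, with associated operator $\mathfrak{a}$ and extensions $\overline{\mathfrak{a}},\underline{\mathfrak{a}},\overline{\mathcal{A}},\underline{\mathcal{A}}$. Let $u\in\overline{\mathcal{X}}$ with $u\ge g$ on $\mathbb{R}^N\setminus\Omega$. Then the following are equivalent: (i) for every $x\in\Omega$, $\mathcal{A}(x,\varphi,u(x))\ge0$ (equivalently $u(x)\ge\mathfrak{a}(x,\varphi)$) for all $\varphi\in\mathcal{X}$ with $\varphi\le u$; (ii) $u(x)\ge\overline{\mathfrak{a}}(x,u)$ for all $x\in\Omega$; (iii) $\overline{\mathcal{A}}(x,u,u(x))\ge0$ for all $x\in\Omega$. Analogously, if $u\in\overline{\mathcal{X}}$ with $u\le g$ on $\mathbb{R}^N\setminus\Omega$, the following are equivalent: (i') for every $x\in\Omega$, $\mathcal{A}(x,\varphi,u(x))\le0$ (equivalently $u(x)\le\mathfrak{a}(x,\varphi)$) for all $\varphi\in\mathcal{X}$ with $\varphi\ge u$; (ii') $u(x)\le\underline{\mathfrak{a}}(x,u)$ for all $x\in\Omega$; (iii') $\underline{\mathcal{A}}(x,u,u(x))\le0$ for all $x\in\Omega$.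
   Context: $\overline{\mathcal{X}}$ is the set of bounded functions $\mathbb{R}^N\to\mathbb{R}$, and $\mathcal{X}\subset\overline{\mathcal{X}}$ a fixed subset. Assumptions: (a) $\varphi_1\le\varphi_2$ implies $\mathcal{A}(x,\varphi_2,s)\le\mathcal{A}(x,\varphi_1,s)$; (b) $s_1\le s_2$ implies $\mathcal{A}(x,\varphi,s_1)\le\mathcal{A}(x,\varphi,s_2)$; (c) for every $(x,\varphi)$ the map $s\mapsto\mathcal{A}(x,\varphi,s)$ has exactly one zero, denoted $\mathfrak{a}(x,\varphi)$. For $\psi\in\overline{\mathcal{X}}$: $\overline{\mathfrak{a}}(x,\psi):=\sup\{\mathfrak{a}(x,\varphi):\varphi\in\mathcal{X},\varphi\le\psi\}$, $\underline{\mathfrak{a}}(x,\psi):=\inf\{\mathfrak{a}(x,\varphi):\varphi\in\mathcal{X},\varphi\ge\psi\}$, $\overline{\mathcal{A}}(x,\psi,s):=\inf\{\mathcal{A}(x,\varphi,s):\varphi\in\mathcal{X},\varphi\le\psi\}$, $\underline{\mathcal{A}}(x,\psi,s):=\sup\{\mathcal{A}(x,\varphi,s):\varphi\in\mathcal{X},\varphi\ge\psi\}$. (Conditions (i)/(i') are the test-function definition of viscosity super/subsolution of the DPP $\mathcal{A}(x,u,u(x))=0$ in $\Omega$, $u=g$ outside; (ii)-(iii)/(ii')-(iii') are the pointwise definition via the extended operators.) *)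

theory Defs
  imports "HOL-Analysis.Analysis"
begin

text \<open>Bounded functions R^N -> R; here R^N is an arbitrary euclidean space 'a.\<close>
definition Xbar :: "('a::euclidean_space \<Rightarrow> real) set" where
  "Xbar = {u. bounded (range u)}"

definition frak_a :: "('a \<Rightarrow> ('a \<Rightarrow> real) \<Rightarrow> real \<Rightarrow> real) \<Rightarrow> 'a \<Rightarrow> ('a \<Rightarrow> real) \<Rightarrow> real" where
  "frak_a A x \<phi> = (THE s. A x \<phi> s = 0)"

text \<open>Extended operators, valued in the extended reals (sup of empty set = -infinity etc.).\<close>
definition frak_a_up ::
  "('a \<Rightarrow> real) set \<Rightarrow> ('a \<Rightarrow> ('a \<Rightarrow> real) \<Rightarrow> real \<Rightarrow> real) \<Rightarrow> 'a \<Rightarrow> ('a \<Rightarrow> real) \<Rightarrow> ereal" where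
  "frak_a_up X A x \<psi> = (SUP \<phi>\<in>{\<phi>\<in>X. \<phi> \<le> \<psi>}. ereal (frak_a A x \<phi>))"

definition frak_a_low ::
  "('a \<Rightarrow> real) set \<Rightarrow> ('a \<Rightarrow> ('a \<Rightarrow> real) \<Rightarrow> real \<Rightarrow> real) \<Rightarrow> 'a \<Rightarrow> ('a \<Rightarrow> real) \<Rightarrow> ereal" where
  "frak_a_low X A x \<psi> = (INF \<phi>\<in>{\<phi>\<in>X. \<phi> \<ge> \<psi>}. ereal (frak_a A x \<phi>))"

definition A_up ::
  "('a \<Rightarrow> real) set \<Rightarrow> ('a \<Rightarrow> ('a \<Rightarrow> real) \<Rightarrow> real \<Rightarrow> real) \<Rightarrow> 'a \<Rightarrow> ('a \<Rightarrow> real) \<Rightarrow> real \<Rightarrow> ereal" where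
  "A_up X A x \<psi> s = (INF \<phi>\<in>{\<phi>\<in>X. \<phi> \<le> \<psi>}. ereal (A x \<phi> s))"

definition A_low ::
  "('a \<Rightarrow> real) set \<Rightarrow> ('a \<Rightarrow> ('a \<Rightarrow> real) \<Rightarrow> real \<Rightarrow> real) \<Rightarrow> 'a \<Rightarrow> ('a \<Rightarrow> real) \<Rightarrow> real \<Rightarrow> ereal" where
  "A_low X A x \<psi> s = (SUP \<phi>\<in>{\<phi>\<in>X. \<phi> \<ge> \<psi>}. ereal (A x \<phi> s))"

end

theory Submission
  imports Defs
begin

lemma key:
  assumes b: "\<And>s1 s2. s1 \<le> s2 \<Longrightarrow> (f::real\<Rightarrow>real) s1 \<le> f s2"
    and c: "\<exists>!s. f s = 0"
  shows "(0 \<le> f s \<longleftrightarrow> (THE s. f s = 0) \<le> s) \<and> (f s \<le> 0 \<longleftrightarrow> s \<le> (THE s. f s = 0))"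
proof -
  define t where "t = (THE s. f s = 0)"
  have t: "f t = 0" unfolding t_def using c by (rule theI')
  have u: "\<And>r. f r = 0 \<Longrightarrow> r = t" using c t by blast
  show ?thesis unfolding t_def[symmetric]
  proof (intro conjI iffI)
    assume "0 \<le> f s" show "t \<le> s"
    proof (rule ccontr)
      assume "\<not> t \<le> s" then have "f s \<le> f t" using b by simp
      then have "f s = 0" using t \<open>0 \<le> f s\<close> by simp
      then have "s = t" by (rule u) with \<open>\<not> t \<le> s\<close> show False by simp
    qed
  next
    assume "t \<le> s" then show "0 \<le> f s" using b t by metis
  next
    assume "f s \<le> 0" show "s \<le> t"
    proof (rule ccontr)
      assume "\<not> s \<le> t" then have "f t \<le> f s" using b by simp
      then have "f s = 0" using t \<open>f s \<le> 0\<close> by simp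
      then have "s = t" by (rule u) with \<open>\<not> s \<le> t\<close> show False by simp
    qed
  next
    assume "s \<le> t" then show "f s \<le> 0" using b t by metis
  qed
qed

theorem mainTheorem5:
  fixes \<Omega> :: "'a::euclidean_space set"
    and g :: "'a \<Rightarrow> real"
    and X :: "('a \<Rightarrow> real) set"
    and A :: "'a \<Rightarrow> ('a \<Rightarrow> real) \<Rightarrow> real \<Rightarrow> real"
  assumes "open \<Omega>" and "connected \<Omega>"
    and "X \<subseteq> Xbar"
    and a: "\<And>x \<phi>1 \<phi>2 s. x \<in> \<Omega> \<Longrightarrow> \<phi>1 \<in> X \<Longrightarrow> \<phi>2 \<in> X \<Longrightarrow> \<phi>1 \<le> \<phi>2 \<Longrightarrow> A x \<phi>2 s \<le> A x \<phi>1 s"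
    and b: "\<And>x \<phi> s1 s2. x \<in> \<Omega> \<Longrightarrow> \<phi> \<in> X \<Longrightarrow> s1 \<le> s2 \<Longrightarrow> A x \<phi> s1 \<le> A x \<phi> s2"
    and c: "\<And>x \<phi>. x \<in> \<Omega> \<Longrightarrow> \<phi> \<in> X \<Longrightarrow> \<exists>!s. A x \<phi> s = 0"
  shows
    "(\<forall>u \<in> Xbar. (\<forall>y. y \<notin> \<Omega> \<longrightarrow> u y \<ge> g y) \<longrightarrow>
        (((\<forall>x\<in>\<Omega>. \<forall>\<phi>\<in>X. \<phi> \<le> u \<longrightarrow> A x \<phi> (u x) \<ge> 0)
           \<longleftrightarrow> (\<forall>x\<in>\<Omega>. ereal (u x) \<ge> frak_a_up X A x u))
         \<and> ((\<forall>x\<in>\<Omega>. ereal (u x) \<ge> frak_a_up X A x u)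
           \<longleftrightarrow> (\<forall>x\<in>\<Omega>. A_up X A x u (u x) \<ge> 0))))
     \<and> (\<forall>u \<in> Xbar. (\<forall>y. y \<notin> \<Omega> \<longrightarrow> u y \<le> g y) \<longrightarrow>
        (((\<forall>x\<in>\<Omega>. \<forall>\<phi>\<in>X. \<phi> \<ge> u \<longrightarrow> A x \<phi> (u x) \<le> 0)
           \<longleftrightarrow> (\<forall>x\<in>\<Omega>. ereal (u x) \<le> frak_a_low X A x u))
         \<and> ((\<forall>x\<in>\<Omega>. ereal (u x) \<le> frak_a_low X A x u)
           \<longleftrightarrow> (\<forall>x\<in>\<Omega>. A_low X A x u (u x) \<le> 0))))"
proof -
  have K: "(0 \<le> A x \<phi> s \<longleftrightarrow> frak_a A x \<phi> \<le> s) \<and> (A x \<phi> s \<le> 0 \<longleftrightarrow> s \<le> frak_a A x \<phi>)"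
    if "x \<in> \<Omega>" "\<phi> \<in> X" for x \<phi> s
  proof -
    have m: "\<And>s1 s2. s1 \<le> s2 \<Longrightarrow> A x \<phi> s1 \<le> A x \<phi> s2" using b[OF that] .
    have u: "\<exists>!s. A x \<phi> s = 0" using c[OF that] .
    show ?thesis unfolding frak_a_def by (rule key[OF m u])
  qed
  have K1: "\<And>x \<phi> s. x \<in> \<Omega> \<Longrightarrow> \<phi> \<in> X \<Longrightarrow> (0 \<le> A x \<phi> s \<longleftrightarrow> frak_a A x \<phi> \<le> s)"
    using K by simp
  have K2: "\<And>x \<phi> s. x \<in> \<Omega> \<Longrightarrow> \<phi> \<in> X \<Longrightarrow> (A x \<phi> s \<le> 0 \<longleftrightarrow> s \<le> frak_a A x \<phi>)"
    using K by simp
  have E1: "\<And>x u. x \<in> \<Omega> \<Longrightarrow> (\<forall>\<phi>\<in>X. \<phi> \<le> u \<longrightarrow> 0 \<le> A x \<phi> (u x)) \<longleftrightarrow> frak_a_up X A x u \<le> ereal (u x)"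
    unfolding frak_a_up_def SUP_le_iff using K1 by auto
  have E2: "\<And>x u. x \<in> \<Omega> \<Longrightarrow> (\<forall>\<phi>\<in>X. \<phi> \<le> u \<longrightarrow> 0 \<le> A x \<phi> (u x)) \<longleftrightarrow> 0 \<le> A_up X A x u (u x)"
    unfolding A_up_def le_INF_iff zero_ereal_def by auto
  have E3: "\<And>x u. x \<in> \<Omega> \<Longrightarrow> (\<forall>\<phi>\<in>X. u \<le> \<phi> \<longrightarrow> A x \<phi> (u x) \<le> 0) \<longleftrightarrow> ereal (u x) \<le> frak_a_low X A x u"
    unfolding frak_a_low_def le_INF_iff using K2 by auto
  have E4: "\<And>x u. x \<in> \<Omega> \<Longrightarrow> (\<forall>\<phi>\<in>X. u \<le> \<phi> \<longrightarrow> A x \<phi> (u x) \<le> 0) \<longleftrightarrow> A_low X A x u (u x) \<le> 0"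
    unfolding A_low_def SUP_le_iff zero_ereal_def by auto
  show ?thesis
  proof (intro conjI ballI impI)
    fix u :: "'a \<Rightarrow> real"
    show "(\<forall>x\<in>\<Omega>. \<forall>\<phi>\<in>X. \<phi> \<le> u \<longrightarrow> A x \<phi> (u x) \<ge> 0) \<longleftrightarrow> (\<forall>x\<in>\<Omega>. ereal (u x) \<ge> frak_a_up X A x u)"
      by (simp add: E1 cong: ball_cong)
    show "(\<forall>x\<in>\<Omega>. ereal (u x) \<ge> frak_a_up X A x u) \<longleftrightarrow> (\<forall>x\<in>\<Omega>. A_up X A x u (u x) \<ge> 0)"
      by (simp add: E1[symmetric] E2 cong: ball_cong)
    show "(\<forall>x\<in>\<Omega>. \<forall>\<phi>\<in>X. \<phi> \<ge> u \<longrightarrow> A x \<phi> (u x) \<le> 0) \<longleftrightarrow> (\<forall>x\<in>\<Omega>. ereal (u x) \<le> frak_a_low X A x u)"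
      by (simp add: E3 cong: ball_cong)
    show "(\<forall>x\<in>\<Omega>. ereal (u x) \<le> frak_a_low X A x u) \<longleftrightarrow> (\<forall>x\<in>\<Omega>. A_low X A x u (u x) \<le> 0)"
      by (simp add: E3[symmetric] E4 cong: ball_cong)
  qed
qed

end
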